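(* Every reflexive forest $T$ (a reflexive graph with no cycles), regarded as a simplicial complex, is cofibrant in the Thomason model structure on $\mathbf{Cpx}$. Furthermore, any inclusion of a tree into another tree is a Thomason cofibration.
   Context: A simplicial complex consists of a vertex set and a collection of nonempty finite subsets (simplices) containing all singletons and closed under nonempty subsets; maps are vertex functions preserving simplices; $\mathbf{Cpx}$ is the category. Reflexive graphs are the complexes whose simplices have at most two elements; a tree is a connected reflexive graph without cycles and a forest is a coproduct of trees. $\mathbf{\Delta}^n$ is the complex on $\{0,\dots,n\}$ with all nonempty subsets simplices, $\mathrm{Sing}(K)_n=\mathbf{Cpx}(\mathbf{\Delta}^n,K)$, $\mathrm{Ex}$ is the right adjoint of barycentric subdivision. Thomason model structure on $\mathbf{Cpx}$: $f$ is a weak equivalence iff $\mathrm{Sing}(f)$ is a weak homotopy equivalence, a fibration iff $\mathrm{Ex}^2\mathrm{Sing}(f)$ is a Kan fibration, and a cofibration iff it has the left lifting property against all trivial fibrations. *)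

theory Defs
  imports "HOL-Analysis.Analysis"
begin

type_synonym 'a cpx = "'a set \<times> 'a set set"

definition verts :: "'a cpx \<Rightarrow> 'a set" where "verts K = fst K"
definition simps :: "'a cpx \<Rightarrow> 'a set set" where "simps K = snd K"

definition is_cpx :: "'a cpx \<Rightarrow> bool" where
  "is_cpx K \<longleftrightarrow>
     (\<forall>s\<in>simps K. s \<noteq> {} \<and> finite s \<and> s \<subseteq> verts K) \<and>
     (\<forall>v\<in>verts K. {v} \<in> simps K) \<and>
     (\<forall>s\<in>simps K. \<forall>t. t \<noteq> {} \<longrightarrow> t \<subseteq> s \<longrightarrow> t \<in> simps K)"

definition cpx_map :: "'a cpx \<Rightarrow> 'b cpx \<Rightarrow> ('a \<Rightarrow> 'b) \<Rightarrow> bool" where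
  "cpx_map K L f \<longleftrightarrow> is_cpx K \<and> is_cpx L \<and>
     (\<forall>v\<in>verts K. f v \<in> verts L) \<and> (\<forall>s\<in>simps K. f ` s \<in> simps L)"

definition empty_cpx :: "'a cpx" where "empty_cpx = ({}, {})"

definition subcomplex :: "'a cpx \<Rightarrow> 'a cpx \<Rightarrow> bool" where
  "subcomplex A K \<longleftrightarrow> is_cpx A \<and> is_cpx K \<and> verts A \<subseteq> verts K \<and> simps A \<subseteq> simps K"

definition refl_graph :: "'a cpx \<Rightarrow> bool" where
  "refl_graph K \<longleftrightarrow> is_cpx K \<and> (\<forall>s\<in>simps K. card s \<le> 2)"

definition walk :: "'a cpx \<Rightarrow> 'a list \<Rightarrow> bool" where
  "walk K ws \<longleftrightarrow> ws \<noteq> [] \<and> set ws \<subseteq> verts K \<and>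
     (\<forall>i. Suc i < length ws \<longrightarrow> {ws ! i, ws ! Suc i} \<in> simps K)"

definition connected_cpx :: "'a cpx \<Rightarrow> bool" where
  "connected_cpx K \<longleftrightarrow> verts K \<noteq> {} \<and>
     (\<forall>u\<in>verts K. \<forall>v\<in>verts K. \<exists>ws. walk K ws \<and> hd ws = u \<and> last ws = v)"

definition has_cycle :: "'a cpx \<Rightarrow> bool" where
  "has_cycle K \<longleftrightarrow> (\<exists>cs. length cs \<ge> 3 \<and> distinct cs \<and> set cs \<subseteq> verts K \<and>
     (\<forall>i<length cs. {cs ! i, cs ! ((i + 1) mod length cs)} \<in> simps K))"

definition tree :: "'a cpx \<Rightarrow> bool" where
  "tree K \<longleftrightarrow> refl_graph K \<and> connected_cpx K \<and> \<not> has_cycle K"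

definition forest :: "'a cpx \<Rightarrow> bool" where
  "forest K \<longleftrightarrow> refl_graph K \<and> \<not> has_cycle K"

text \<open>A simplicial set: sets of n-simplices, and for each operator
  theta : [m] -> [n] (a monotone map) an action X_n -> X_m, written act m n theta.\<close>
type_synonym 'x sset = "(nat \<Rightarrow> 'x set) \<times> (nat \<Rightarrow> nat \<Rightarrow> (nat \<Rightarrow> nat) \<Rightarrow> 'x \<Rightarrow> 'x)"

definition cells :: "'x sset \<Rightarrow> nat \<Rightarrow> 'x set" where "cells X = fst X"
definition act :: "'x sset \<Rightarrow> nat \<Rightarrow> nat \<Rightarrow> (nat \<Rightarrow> nat) \<Rightarrow> 'x \<Rightarrow> 'x" where "act X = snd X"

definition simp_op :: "nat \<Rightarrow> nat \<Rightarrow> (nat \<Rightarrow> nat) \<Rightarrow> bool" where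
  "simp_op m n \<theta> \<longleftrightarrow> (\<forall>i\<le>m. \<theta> i \<le> n) \<and> (\<forall>i j. i \<le> j \<longrightarrow> j \<le> m \<longrightarrow> \<theta> i \<le> \<theta> j)"

definition sset_map :: "'x sset \<Rightarrow> 'y sset \<Rightarrow> (nat \<Rightarrow> 'x \<Rightarrow> 'y) \<Rightarrow> bool" where
  "sset_map X Y f \<longleftrightarrow> (\<forall>n. \<forall>x\<in>cells X n. f n x \<in> cells Y n) \<and>
     (\<forall>m n \<theta>. simp_op m n \<theta> \<longrightarrow> (\<forall>x\<in>cells X n. f m (act X m n \<theta> x) = act Y m n \<theta> (f n x)))"

definition coface :: "nat \<Rightarrow> nat \<Rightarrow> nat" where
  "coface i j = (if j < i then j else Suc j)"

definition face :: "'x sset \<Rightarrow> nat \<Rightarrow> nat \<Rightarrow> 'x \<Rightarrow> 'x" where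
  "face X n i x = act X (n - 1) n (coface i) x"

text \<open>Kan fibration: right lifting against all horn inclusions, written out via
  compatible families of faces (the standard description of maps out of a horn).\<close>
definition kan_fibration :: "'x sset \<Rightarrow> 'y sset \<Rightarrow> (nat \<Rightarrow> 'x \<Rightarrow> 'y) \<Rightarrow> bool" where
  "kan_fibration X Y p \<longleftrightarrow> sset_map X Y p \<and>
     (\<forall>n k (xs :: nat \<Rightarrow> 'x) y. 1 \<le> n \<longrightarrow> k \<le> n \<longrightarrow>
        (\<forall>i\<le>n. i \<noteq> k \<longrightarrow> xs i \<in> cells X (n - 1)) \<longrightarrow>
        (\<forall>i j. i < j \<longrightarrow> j \<le> n \<longrightarrow> i \<noteq> k \<longrightarrow> j \<noteq> k \<longrightarrow>
            face X (n - 1) i (xs j) = face X (n - 1) (j - 1) (xs i)) \<longrightarrow>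
        y \<in> cells Y n \<longrightarrow>
        (\<forall>i\<le>n. i \<noteq> k \<longrightarrow> face Y n i y = p (n - 1) (xs i)) \<longrightarrow>
        (\<exists>z\<in>cells X n. p n z = y \<and> (\<forall>i\<le>n. i \<noteq> k \<longrightarrow> face X n i z = xs i)))"

text \<open>An n-simplex of Sing(K) is a map Delta^n -> K, i.e. a list of n+1 vertices
  whose set of values is a simplex.\<close>
definition Sing :: "'a cpx \<Rightarrow> 'a list sset" where
  "Sing K = ((\<lambda>n. {xs. length xs = Suc n \<and> set xs \<in> simps K}),
             (\<lambda>m n \<theta> xs. map (\<lambda>j. xs ! \<theta> j) [0..<Suc m]))"

definition Sing_map :: "('a \<Rightarrow> 'b) \<Rightarrow> nat \<Rightarrow> 'a list \<Rightarrow> 'b list" where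
  "Sing_map f n xs = map f xs"

text \<open>sd Delta^n is the nerve of the poset of nonempty subsets of [n]; its k-simplices
  are weakly increasing chains of length k+1.\<close>
definition chains :: "nat \<Rightarrow> nat set list set" where
  "chains n = {c. c \<noteq> [] \<and> (\<forall>s\<in>set c. s \<noteq> {} \<and> s \<subseteq> {0..n}) \<and> sorted_wrt (\<subseteq>) c}"

text \<open>Ex(X)_n = simplicial maps sd Delta^n -> X.\<close>
definition Ex :: "'x sset \<Rightarrow> (nat set list \<Rightarrow> 'x) sset" where
  "Ex X = ((\<lambda>n. {g. (\<forall>c\<in>chains n. g c \<in> cells X (length c - 1)) \<and>
                    (\<forall>c\<in>chains n. \<forall>k \<theta>. simp_op k (length c - 1) \<theta> \<longrightarrow>
                        g (map (\<lambda>j. c ! \<theta> j) [0..<Suc k]) = act X k (length c - 1) \<theta> (g c)) \<and>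
                    (\<forall>c. c \<notin> chains n \<longrightarrow> g c = undefined)}),
           (\<lambda>m n \<theta> g. (\<lambda>c. if c \<in> chains m then g (map (\<lambda>s. \<theta> ` s) c) else undefined)))"

definition Ex_map :: "(nat \<Rightarrow> 'x \<Rightarrow> 'y) \<Rightarrow> nat \<Rightarrow> (nat set list \<Rightarrow> 'x) \<Rightarrow> (nat set list \<Rightarrow> 'y)" where
  "Ex_map f n g = (\<lambda>c. if c \<in> chains n then f (length c - 1) (g c) else undefined)"

definition std_simplex :: "nat \<Rightarrow> (nat \<Rightarrow> real) set" where
  "std_simplex n = {t. (\<forall>i. 0 \<le> t i) \<and> (\<forall>i>n. t i = 0) \<and> (\<Sum>i\<le>n. t i) = 1}"

definition push :: "nat \<Rightarrow> (nat \<Rightarrow> nat) \<Rightarrow> (nat \<Rightarrow> real) \<Rightarrow> nat \<Rightarrow> real" where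
  "push m \<theta> t j = (\<Sum>i\<in>{i. i \<le> m \<and> \<theta> i = j}. t i)"

definition real_pts :: "'x sset \<Rightarrow> (nat \<times> 'x \<times> (nat \<Rightarrow> real)) set" where
  "real_pts X = {(n, x, t). x \<in> cells X n \<and> t \<in> std_simplex n}"

definition real_gen :: "'x sset \<Rightarrow> ((nat \<times> 'x \<times> (nat \<Rightarrow> real)) \<times> (nat \<times> 'x \<times> (nat \<Rightarrow> real))) set" where
  "real_gen X = {((m, act X m n \<theta> x, t), (n, x, push m \<theta> t)) | m n \<theta> x t.
                   simp_op m n \<theta> \<and> x \<in> cells X n \<and> t \<in> std_simplex m}"

definition real_rel :: "'x sset \<Rightarrow> ((nat \<times> 'x \<times> (nat \<Rightarrow> real)) \<times> (nat \<times> 'x \<times> (nat \<Rightarrow> real))) set" where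
  "real_rel X = (real_gen X \<union> (real_gen X)\<inverse> \<union> Id_on (real_pts X))\<^sup>*"

definition real_carrier :: "'x sset \<Rightarrow> (nat \<times> 'x \<times> (nat \<Rightarrow> real)) set set" where
  "real_carrier X = real_pts X // real_rel X"

definition real_open :: "'x sset \<Rightarrow> (nat \<times> 'x \<times> (nat \<Rightarrow> real)) set set \<Rightarrow> bool" where
  "real_open X U \<longleftrightarrow> U \<subseteq> real_carrier X \<and>
     (\<forall>n. \<forall>x\<in>cells X n. openin (subtopology (powertop_real UNIV) (std_simplex n))
                             {t \<in> std_simplex n. real_rel X `` {(n, x, t)} \<in> U})"

lemma istopology_real_open: "istopology (real_open X)"
  unfolding istopology_def
proof (intro conjI allI impI)
  fix S T assume S: "real_open X S" and T: "real_open X T"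
  show "real_open X (S \<inter> T)"
    unfolding real_open_def
  proof (intro conjI ballI allI)
    show "S \<inter> T \<subseteq> real_carrier X" using S unfolding real_open_def by blast
    fix n x assume x: "x \<in> cells X n"
    have "{t \<in> std_simplex n. real_rel X `` {(n, x, t)} \<in> S \<inter> T} =
          {t \<in> std_simplex n. real_rel X `` {(n, x, t)} \<in> S} \<inter>
          {t \<in> std_simplex n. real_rel X `` {(n, x, t)} \<in> T}" by blast
    then show "openin (subtopology (powertop_real UNIV) (std_simplex n))
                 {t \<in> std_simplex n. real_rel X `` {(n, x, t)} \<in> S \<inter> T}"
      using S T x unfolding real_open_def by (simp add: openin_Int)
  qed
next
  fix K assume K: "\<forall>S\<in>K. real_open X S"
  show "real_open X (\<Union>K)"
    unfolding real_open_def
  proof (intro conjI ballI allI)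
    show "\<Union>K \<subseteq> real_carrier X" using K unfolding real_open_def by blast
    fix n x assume x: "x \<in> cells X n"
    have "{t \<in> std_simplex n. real_rel X `` {(n, x, t)} \<in> \<Union>K} =
          \<Union>((\<lambda>S. {t \<in> std_simplex n. real_rel X `` {(n, x, t)} \<in> S}) ` K)" by blast
    then show "openin (subtopology (powertop_real UNIV) (std_simplex n))
                 {t \<in> std_simplex n. real_rel X `` {(n, x, t)} \<in> \<Union>K}"
      using K x unfolding real_open_def by (auto intro!: openin_Union)
  qed
qed

definition realize :: "'x sset \<Rightarrow> (nat \<times> 'x \<times> (nat \<Rightarrow> real)) set topology" where
  "realize X = topology (real_open X)"

definition realize_map :: "'y sset \<Rightarrow> (nat \<Rightarrow> 'x \<Rightarrow> 'y) \<Rightarrow>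
    (nat \<times> 'x \<times> (nat \<Rightarrow> real)) set \<Rightarrow> (nat \<times> 'y \<times> (nat \<Rightarrow> real)) set" where
  "realize_map Y f P = (\<Union>(n, x, t)\<in>P. real_rel Y `` {(n, f n x, t)})"

definition sphere_base :: "nat \<Rightarrow> real" where
  "sphere_base i = (if i = 0 then 1 else 0)"

text \<open>f induces a bijection on path components and, for all n >= 1 and all base points,
  a bijection (hence isomorphism) pi_n(X,x0) -> pi_n(Y, f x0), where pi_n is the set of
  based homotopy classes of based maps S^n -> X.\<close>
definition weak_homotopy_equivalence :: "'a topology \<Rightarrow> 'b topology \<Rightarrow> ('a \<Rightarrow> 'b) \<Rightarrow> bool" where
  "weak_homotopy_equivalence X Y f \<longleftrightarrow> continuous_map X Y f \<and>
     (\<forall>y\<in>topspace Y. \<exists>x\<in>topspace X. path_component_of Y (f x) y) \<and>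
     (\<forall>x1\<in>topspace X. \<forall>x2\<in>topspace X. path_component_of Y (f x1) (f x2) \<longrightarrow> path_component_of X x1 x2) \<and>
     (\<forall>n\<ge>1. \<forall>x0\<in>topspace X.
        (\<forall>h. continuous_map (nsphere n) Y h \<and> h sphere_base = f x0 \<longrightarrow>
           (\<exists>g. continuous_map (nsphere n) X g \<and> g sphere_base = x0 \<and>
                homotopic_with (\<lambda>k. k sphere_base = f x0) (nsphere n) Y (f \<circ> g) h)) \<and>
        (\<forall>g1 g2. continuous_map (nsphere n) X g1 \<and> g1 sphere_base = x0 \<and>
                 continuous_map (nsphere n) X g2 \<and> g2 sphere_base = x0 \<and>
                 homotopic_with (\<lambda>k. k sphere_base = f x0) (nsphere n) Y (f \<circ> g1) (f \<circ> g2) \<longrightarrow>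
                 homotopic_with (\<lambda>k. k sphere_base = x0) (nsphere n) X g1 g2))"

definition sset_weq :: "'x sset \<Rightarrow> 'y sset \<Rightarrow> (nat \<Rightarrow> 'x \<Rightarrow> 'y) \<Rightarrow> bool" where
  "sset_weq X Y f \<longleftrightarrow> sset_map X Y f \<and>
     weak_homotopy_equivalence (realize X) (realize Y) (realize_map Y f)"

definition thomason_weq :: "'a cpx \<Rightarrow> 'b cpx \<Rightarrow> ('a \<Rightarrow> 'b) \<Rightarrow> bool" where
  "thomason_weq K L f \<longleftrightarrow> cpx_map K L f \<and> sset_weq (Sing K) (Sing L) (Sing_map f)"

definition thomason_fib :: "'a cpx \<Rightarrow> 'b cpx \<Rightarrow> ('a \<Rightarrow> 'b) \<Rightarrow> bool" where
  "thomason_fib K L f \<longleftrightarrow> cpx_map K L f \<and>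
     kan_fibration (Ex (Ex (Sing K))) (Ex (Ex (Sing L))) (Ex_map (Ex_map (Sing_map f)))"

definition thomason_trivial_fib :: "'a cpx \<Rightarrow> 'b cpx \<Rightarrow> ('a \<Rightarrow> 'b) \<Rightarrow> bool" where
  "thomason_trivial_fib K L f \<longleftrightarrow> thomason_fib K L f \<and> thomason_weq K L f"

text \<open>i : A -> T has the left lifting property against p : E -> B.  (Maps of complexes
  are identified when they agree on vertices.)\<close>
definition has_llp :: "'a cpx \<Rightarrow> 'b cpx \<Rightarrow> ('a \<Rightarrow> 'b) \<Rightarrow> 'c cpx \<Rightarrow> 'd cpx \<Rightarrow> ('c \<Rightarrow> 'd) \<Rightarrow> bool" where
  "has_llp A T i E B p \<longleftrightarrow>
     (\<forall>u g. cpx_map A E u \<longrightarrow> cpx_map T B g \<longrightarrow> (\<forall>v\<in>verts A. p (u v) = g (i v)) \<longrightarrow>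
        (\<exists>h. cpx_map T E h \<and> (\<forall>v\<in>verts A. h (i v) = u v) \<and> (\<forall>v\<in>verts T. p (h v) = g v)))"

end

theory Submission
  imports Defs
begin

definition joined :: "'a cpx \<Rightarrow> 'a \<Rightarrow> 'a \<Rightarrow> bool" where
  "joined K u v \<longleftrightarrow> (\<exists>ws. walk K ws \<and> hd ws = u \<and> last ws = v)"

lemma walk_single[simp]: "walk K [v] \<longleftrightarrow> v \<in> verts K"
  unfolding walk_def by auto

lemma walk_Cons2[simp]: "walk K (u # v # ws) \<longleftrightarrow> u \<in> verts K \<and> {u,v} \<in> simps K \<and> walk K (v # ws)"
proof
  assume a: "walk K (u # v # ws)"
  have all: "\<forall>i. Suc i < length (u#v#ws) \<longrightarrow> {(u#v#ws) ! i, (u#v#ws) ! Suc i} \<in> simps K"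
    using a unfolding walk_def by blast
  have "Suc 0 < length (u#v#ws)" by simp
  then have "{(u#v#ws) ! 0, (u#v#ws) ! Suc 0} \<in> simps K" using all by blast
  then have e0: "{u,v} \<in> simps K" by simp
  have "\<forall>i. Suc i < length (v#ws) \<longrightarrow> {(v#ws) ! i, (v#ws) ! Suc i} \<in> simps K"
  proof (intro allI impI)
    fix i assume "Suc i < length (v#ws)"
    then have "Suc (Suc i) < length (u#v#ws)" by simp
    then have "{(u#v#ws) ! Suc i, (u#v#ws) ! Suc (Suc i)} \<in> simps K" using all by blast
    then show "{(v#ws) ! i, (v#ws) ! Suc i} \<in> simps K" by simp
  qed
  moreover have "set (u#v#ws) \<subseteq> verts K" using a unfolding walk_def by blast
  ultimately show "u \<in> verts K \<and> {u,v} \<in> simps K \<and> walk K (v # ws)" using e0 unfolding walk_def by simp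
next
  assume a: "u \<in> verts K \<and> {u,v} \<in> simps K \<and> walk K (v # ws)"
  show "walk K (u # v # ws)" unfolding walk_def
  proof (intro conjI allI impI)
    show "set (u # v # ws) \<subseteq> verts K" using a unfolding walk_def by simp
    fix i assume i: "Suc i < length (u # v # ws)"
    show "{(u # v # ws) ! i, (u # v # ws) ! Suc i} \<in> simps K"
    proof (cases i)
      case 0 then show ?thesis using a by simp
    next
      case (Suc j)
      have "Suc j < length (v # ws)" using i Suc by simp
      then have "{(v # ws) ! j, (v # ws) ! Suc j} \<in> simps K" using a unfolding walk_def by blast
      then show ?thesis using Suc by simp
    qed
  qed simp
qed

lemma walk_nonempty: "walk K ws \<Longrightarrow> ws \<noteq> []" unfolding walk_def by auto

lemma walk_Nil[simp]: "\<not> walk K []" unfolding walk_def by auto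

lemma walk_append:
  assumes "xs \<noteq> []" "ys \<noteq> []"
  shows "walk K (xs @ ys) \<longleftrightarrow> walk K xs \<and> walk K ys \<and> {last xs, hd ys} \<in> simps K"
  using assms
proof (induction xs)
  case Nil then show ?case by simp
next
  case (Cons a xs)
  show ?case
  proof (cases "xs = []")
    case True then show ?thesis using Cons.prems by (cases ys) auto
  next
    case False
    then obtain b zs where xs: "xs = b # zs" by (cases xs) auto
    have IH: "walk K (xs @ ys) = (walk K xs \<and> walk K ys \<and> {last xs, hd ys} \<in> simps K)"
      using Cons.IH False Cons.prems by blast
    show ?thesis using IH xs by auto
  qed
qed

lemma walk_rev: "walk K ws \<Longrightarrow> walk K (rev ws)"
proof (induction ws)
  case Nil then show ?case by simp
next
  case (Cons a ws)
  show ?case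
  proof (cases "ws = []")
    case True then show ?thesis using Cons by simp
  next
    case False
    then obtain b zs where ws: "ws = b # zs" by (cases ws) auto
    have "walk K (rev ws @ [a])"
      using Cons.prems Cons.IH ws by (subst walk_append) (auto simp: insert_commute)
    then show ?thesis by simp
  qed
qed

lemma walk_subset: "walk K ws \<Longrightarrow> set ws \<subseteq> verts K" unfolding walk_def by auto

lemma walk_mono: "walk S ws \<Longrightarrow> verts S \<subseteq> verts R \<Longrightarrow> simps S \<subseteq> simps R \<Longrightarrow> walk R ws"
  unfolding walk_def by blast

lemma joined_sym: "joined K u v \<Longrightarrow> joined K v u"
  unfolding joined_def
  by (metis hd_rev last_rev walk_rev)

lemma joined_trans: assumes "joined K u v" "joined K v w" shows "joined K u w"
proof -
  obtain xs ys where xs: "walk K xs" "hd xs = u" "last xs = v" and ys: "walk K ys" "hd ys = v" "last ys = w"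
    using assms unfolding joined_def by blast
  have ne: "xs \<noteq> []" "ys \<noteq> []" using xs ys by auto
  show ?thesis
  proof (cases "tl ys")
    case Nil
    then have "ys = [v]" using ne ys by (cases ys) auto
    then show ?thesis using xs ys unfolding joined_def by auto
  next
    case (Cons c cs)
    have ysd: "ys = v # c # cs" using Cons ne ys by (cases ys) auto
    have "walk K (xs @ c # cs)" using xs ys ysd ne by (subst walk_append) auto
    then show ?thesis unfolding joined_def using xs ys ysd ne by (intro exI[of _ "xs @ c # cs"]) auto
  qed
qed

lemma joined_edge: "is_cpx K \<Longrightarrow> {u,v} \<in> simps K \<Longrightarrow> joined K u v"
  unfolding joined_def is_cpx_def by (intro exI[of _ "[u,v]"]) auto

lemma walk_distinct:
  "walk K ws \<Longrightarrow> \<exists>ds. walk K ds \<and> distinct ds \<and> hd ds = hd ws \<and> last ds = last ws \<and> set ds \<subseteq> set ws"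
proof (induction ws)
  case Nil then show ?case by simp
next
  case (Cons a ws)
  show ?case
  proof (cases "ws = []")
    case True then show ?thesis using Cons by (intro exI[of _ "[a]"]) auto
  next
    case False
    then obtain b zs where wsd: "ws = b # zs" by (cases ws) auto
    then have w: "walk K ws" "a \<in> verts K" "{a,b} \<in> simps K" using Cons.prems by auto
    obtain ds where ds: "walk K ds" "distinct ds" "hd ds = hd ws" "last ds = last ws" "set ds \<subseteq> set ws"
      using Cons.IH w by blast
    have dne: "ds \<noteq> []" using ds by auto
    show ?thesis
    proof (cases "a \<in> set ds")
      case True
      then obtain as bs where dsd: "ds = as @ a # bs" by (meson split_list)
      have wab: "walk K (a # bs)"
      proof (cases "as = []")
        case True then show ?thesis using dsd ds by simp
      next
        case False then show ?thesis using dsd ds walk_append[of as "a # bs" K] by auto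
      qed
      have "last (a # bs) = last (a # ws)" using dsd ds wsd by (cases bs) auto
      then show ?thesis using ds dsd wab
        by (intro exI[of _ "a # bs"]) auto
    next
      case False
      have "walk K (a # ds)" using w ds dne wsd by (cases ds) auto
      then show ?thesis using False ds dne wsd by (intro exI[of _ "a # ds"]) auto
    qed
  qed
qed

lemma cycle_from_walk:
  assumes "walk K cs" "distinct cs" "length cs \<ge> 3" "{last cs, hd cs} \<in> simps K"
  shows "has_cycle K"
  unfolding has_cycle_def
proof (intro exI[of _ cs] conjI allI impI)
  show "set cs \<subseteq> verts K" using assms walk_subset by blast
  fix i assume i: "i < length cs"
  show "{cs ! i, cs ! ((i + 1) mod length cs)} \<in> simps K"
  proof (cases "Suc i < length cs")
    case True then show ?thesis using assms(1) unfolding walk_def by auto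
  next
    case False
    then have "i = length cs - 1" using i by auto
    moreover have "cs ! (length cs - 1) = last cs" using assms(3) by (metis last_conv_nth list.size(3) not_numeral_le_zero)
    moreover have "cs ! 0 = hd cs" using assms(3) by (cases cs) auto
    moreover have "(length cs - 1 + 1) mod length cs = 0" using assms(3) by (metis Suc_diff_1 Suc_eq_plus1 bot_nat_0.extremum_strict dual_order.strict_trans1 mod_self zero_less_numeral)
    ultimately show ?thesis using assms(3,4) by (simp add: insert_commute)
  qed
qed (use assms in auto)

lemma first_exit:
  "walk K ws \<Longrightarrow> hd ws \<in> D \<Longrightarrow> last ws \<notin> D \<Longrightarrow> \<exists>x y. x \<in> D \<and> y \<notin> D \<and> {x,y} \<in> simps K"
proof (induction ws)
  case Nil then show ?case by simp
next
  case (Cons a ws)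
  show ?case
  proof (cases "ws = []")
    case True then show ?thesis using Cons by simp
  next
    case False
    then obtain b zs where wsd: "ws = b # zs" by (cases ws) auto
    show ?thesis
    proof (cases "b \<in> D")
      case True then show ?thesis using Cons.IH Cons.prems wsd by auto
    next
      case False then show ?thesis using Cons.prems wsd by auto
    qed
  qed
qed


lemma simp_verts: "is_cpx K \<Longrightarrow> s \<in> simps K \<Longrightarrow> x \<in> s \<Longrightarrow> x \<in> verts K"
  unfolding is_cpx_def by blast

lemma no_second_edge:
  assumes nc: "\<not> has_cycle R" and Rc: "is_cpx R" and w: "walk R ws" "hd ws = x" "last ws = z"
    and sD: "set ws \<subseteq> D" and y: "y \<notin> D" and xz: "x \<noteq> z"
    and e1: "{y,x} \<in> simps R" and e2: "{z,y} \<in> simps R"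
  shows False
proof -
  obtain ds where ds: "walk R ds" "distinct ds" "hd ds = x" "last ds = z" "set ds \<subseteq> set ws"
    using walk_distinct[OF w(1)] w by blast
  have yn: "y \<notin> set ds" using ds sD y by blast
  obtain d1 rest where dsd: "ds = d1 # rest" using ds by (cases ds) auto
  have "rest \<noteq> []" using dsd ds xz by auto
  then have len: "length (y # ds) \<ge> 3" using dsd by (cases rest) auto
  have yv: "y \<in> verts R" using simp_verts[OF Rc e1] by simp
  have "walk R (y # ds)" using dsd ds yv e1 by simp
  moreover have "distinct (y # ds)" using ds yn by simp
  moreover have "{last (y # ds), hd (y # ds)} \<in> simps R" using ds dsd e2 by simp
  ultimately have "has_cycle R" using cycle_from_walk len by blast
  then show False using nc by blast
qed

lemma refl_graph_simp:
  assumes "refl_graph K" "s \<in> simps K"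
  shows "\<exists>x y. s = {x,y}"
proof -
  have "s \<noteq> {}" "finite s" "card s \<le> 2" using assms unfolding refl_graph_def is_cpx_def by auto
  then show ?thesis
  proof -
    obtain x where x: "x \<in> s" using \<open>s \<noteq> {}\<close> by blast
    show ?thesis
    proof (cases "s - {x} = {}")
      case True then show ?thesis using x by (intro exI[of _ x]) auto
    next
      case False
      then obtain y where y: "y \<in> s" "y \<noteq> x" by blast
      have "card {x,y} = 2" using y by simp
      moreover have "{x,y} \<subseteq> s" using x y by simp
      ultimately have "s = {x,y}" using \<open>finite s\<close> \<open>card s \<le> 2\<close>
        by (metis card_seteq)
      then show ?thesis by blast
    qed
  qed
qed

lemma extend:
  assumes Rg: "refl_graph R" and nc: "\<not> has_cycle R"
  and Ec: "is_cpx E" and g: "cpx_map R B g"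
  and P: "\<And>e b'. e \<in> verts E \<Longrightarrow> {p e, b'} \<in> simps B \<Longrightarrow> \<exists>e'\<in>verts E. p e' = b' \<and> {e,e'} \<in> simps E"
  and D0: "D0 \<subseteq> verts R"
  and u1: "\<And>v. v \<in> D0 \<Longrightarrow> u v \<in> verts E \<and> p (u v) = g v"
  and u2: "\<And>a b. a \<in> D0 \<Longrightarrow> b \<in> D0 \<Longrightarrow> {a,b} \<in> simps R \<Longrightarrow> {u a, u b} \<in> simps E"
  and rc0: "\<And>a b. a \<in> D0 \<Longrightarrow> b \<in> D0 \<Longrightarrow> joined R a b \<Longrightarrow> \<exists>ws. walk R ws \<and> hd ws = a \<and> last ws = b \<and> set ws \<subseteq> D0"
  and Q: "\<And>v. v \<in> verts R \<Longrightarrow> (\<forall>d\<in>D0. \<not> joined R v d) \<Longrightarrow> \<exists>e\<in>verts E. p e = g v"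
  shows "\<exists>h. cpx_map R E h \<and> (\<forall>v\<in>D0. h v = u v) \<and> (\<forall>v\<in>verts R. p (h v) = g v)"
proof -
  have Rc: "is_cpx R" using Rg unfolding refl_graph_def by blast
  have Bc: "is_cpx B" using g unfolding cpx_map_def by blast
  define ok where "ok F \<longleftrightarrow> F \<subseteq> verts R \<times> verts E \<and> (\<forall>x e e'. (x,e)\<in>F \<longrightarrow> (x,e')\<in>F \<longrightarrow> e = e') \<and>
     (\<forall>v\<in>D0. (v,u v)\<in>F) \<and> (\<forall>x e. (x,e)\<in>F \<longrightarrow> p e = g x) \<and>
     (\<forall>x e y e'. (x,e)\<in>F \<longrightarrow> (y,e')\<in>F \<longrightarrow> {x,y}\<in>simps R \<longrightarrow> {e,e'}\<in>simps E) \<and>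
     (\<forall>a\<in>Domain F. \<forall>b\<in>Domain F. joined R a b \<longrightarrow> (\<exists>ws. walk R ws \<and> hd ws = a \<and> last ws = b \<and> set ws \<subseteq> Domain F))" for F
  define A where "A = {F. ok F}"
  define G0 where "G0 = (\<lambda>v. (v, u v)) ` D0"
  have domG0: "Domain G0 = D0" unfolding G0_def by force
  have okG0: "ok G0" unfolding ok_def
  proof (intro conjI allI impI ballI)
    show "G0 \<subseteq> verts R \<times> verts E" unfolding G0_def using D0 u1 by auto
  next
    fix a b assume "a \<in> Domain G0" "b \<in> Domain G0" "joined R a b"
    then show "\<exists>ws. walk R ws \<and> hd ws = a \<and> last ws = b \<and> set ws \<subseteq> Domain G0"
      using rc0 domG0 by simp
  next
    fix x e e' assume "(x,e) \<in> G0" "(x,e') \<in> G0" then show "e = e'" unfolding G0_def by auto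
  next
    fix v assume "v \<in> D0" then show "(v,u v) \<in> G0" unfolding G0_def by blast
  next
    fix x e assume "(x,e) \<in> G0" then show "p e = g x" unfolding G0_def using u1 by auto
  next
    fix x e y e' assume "(x,e) \<in> G0" "(y,e') \<in> G0" "{x,y} \<in> simps R"
    then show "{e,e'} \<in> simps E" unfolding G0_def using u2 by auto
  qed
  have okD: "F \<subseteq> verts R \<times> verts E" "\<And>x e e'. (x,e)\<in>F \<Longrightarrow> (x,e')\<in>F \<Longrightarrow> e = e'"
    "\<And>v. v\<in>D0 \<Longrightarrow> (v,u v)\<in>F" "\<And>x e. (x,e)\<in>F \<Longrightarrow> p e = g x"
    "\<And>x e y e'. (x,e)\<in>F \<Longrightarrow> (y,e')\<in>F \<Longrightarrow> {x,y}\<in>simps R \<Longrightarrow> {e,e'}\<in>simps E"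
    "\<And>a b. a\<in>Domain F \<Longrightarrow> b\<in>Domain F \<Longrightarrow> joined R a b \<Longrightarrow> (\<exists>ws. walk R ws \<and> hd ws = a \<and> last ws = b \<and> set ws \<subseteq> Domain F)"
    if "ok F" for F
  proof -
    note o = that[unfolded ok_def]
    show "F \<subseteq> verts R \<times> verts E" using o by (rule conjunct1)
    show "\<And>x e e'. (x,e)\<in>F \<Longrightarrow> (x,e')\<in>F \<Longrightarrow> e = e'" using conjunct1[OF conjunct2[OF o]] by blast
    show "\<And>v. v\<in>D0 \<Longrightarrow> (v,u v)\<in>F" using conjunct1[OF conjunct2[OF conjunct2[OF o]]] by blast
    show "\<And>x e. (x,e)\<in>F \<Longrightarrow> p e = g x" using conjunct1[OF conjunct2[OF conjunct2[OF conjunct2[OF o]]]] by blast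
    show "\<And>x e y e'. (x,e)\<in>F \<Longrightarrow> (y,e')\<in>F \<Longrightarrow> {x,y}\<in>simps R \<Longrightarrow> {e,e'}\<in>simps E"
      using conjunct1[OF conjunct2[OF conjunct2[OF conjunct2[OF conjunct2[OF o]]]]] by blast
    show "\<And>a b. a\<in>Domain F \<Longrightarrow> b\<in>Domain F \<Longrightarrow> joined R a b \<Longrightarrow> (\<exists>ws. walk R ws \<and> hd ws = a \<and> last ws = b \<and> set ws \<subseteq> Domain F)"
      using conjunct2[OF conjunct2[OF conjunct2[OF conjunct2[OF conjunct2[OF o]]]]] by blast
  qed
  have chainb: "\<forall>C\<in>Zorn.chains A. \<exists>U\<in>A. \<forall>X\<in>C. X \<subseteq> U"
  proof
    fix C assume C: "C \<in> Zorn.chains A"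
    then have CA: "C \<subseteq> A" and ch: "\<And>X Y. X \<in> C \<Longrightarrow> Y \<in> C \<Longrightarrow> X \<subseteq> Y \<or> Y \<subseteq> X"
      unfolding Zorn.chains_def chain_subset_def by auto
    show "\<exists>U\<in>A. \<forall>X\<in>C. X \<subseteq> U"
    proof (cases "C = {}")
      case True then show ?thesis using okG0 A_def by blast
    next
      case False
      have okC: "\<And>X. X \<in> C \<Longrightarrow> ok X" using CA A_def by blast
      have two: "\<exists>X\<in>C. a \<in> X \<and> b \<in> X" if "a \<in> \<Union>C" "b \<in> \<Union>C" for a b
        using that ch by blast
      have "ok (\<Union>C)" unfolding ok_def
      proof (intro conjI allI impI ballI)
        show "\<Union>C \<subseteq> verts R \<times> verts E" using okD(1)[OF okC] by blast
      next
        fix x e e' assume "(x,e) \<in> \<Union>C" "(x,e') \<in> \<Union>C"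
        then obtain X where "X \<in> C" "(x,e) \<in> X" "(x,e') \<in> X" using two by blast
        then show "e = e'" using okD(2)[OF okC] by blast
      next
        fix v assume "v \<in> D0"
        then show "(v, u v) \<in> \<Union>C" using okD(3)[OF okC] False by blast
      next
        fix x e assume "(x,e) \<in> \<Union>C"
        then show "p e = g x" using okD(4)[OF okC] by blast
      next
        fix x e y e' assume "(x,e) \<in> \<Union>C" "(y,e') \<in> \<Union>C" "{x,y} \<in> simps R"
        moreover obtain X where "X \<in> C" "(x,e) \<in> X" "(y,e') \<in> X" using two calculation by blast
        ultimately show "{e,e'} \<in> simps E" using okD(5)[OF okC] by blast
      next
        fix a b assume a: "a \<in> Domain (\<Union>C)" and b: "b \<in> Domain (\<Union>C)" and j: "joined R a b"
        obtain ea eb where "(a,ea) \<in> \<Union>C" "(b,eb) \<in> \<Union>C" using a b by blast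
        then obtain X where X: "X \<in> C" "(a,ea) \<in> X" "(b,eb) \<in> X" using two by blast
        then obtain ws where "walk R ws \<and> hd ws = a \<and> last ws = b \<and> set ws \<subseteq> Domain X"
          using okD(6)[OF okC[OF X(1)]] X j by blast
        moreover have "Domain X \<subseteq> Domain (\<Union>C)" using X by blast
        ultimately show "\<exists>ws. walk R ws \<and> hd ws = a \<and> last ws = b \<and> set ws \<subseteq> Domain (\<Union>C)" by blast
      qed
      then show ?thesis using A_def by blast
    qed
  qed
  obtain M where MA: "M \<in> A" and max: "\<And>X. X \<in> A \<Longrightarrow> M \<subseteq> X \<Longrightarrow> X = M"
    using Zorn_Lemma2[OF chainb] by blast
  have okM: "ok M" using MA A_def by blast
  note MRE = okD(1)[OF okM] and Msv = okD(2)[OF okM] and MD0 = okD(3)[OF okM] and Mp = okD(4)[OF okM]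
    and Med = okD(5)[OF okM] and Mrc = okD(6)[OF okM]
  have ext_ok: "ok (insert (y,e') M)"
    if yR: "y \<in> verts R" and yM: "y \<notin> Domain M" and e'E: "e' \<in> verts E" and pe': "p e' = g y"
      and edges: "\<And>z f. (z,f) \<in> M \<Longrightarrow> {y,z} \<in> simps R \<Longrightarrow> {e',f} \<in> simps E"
      and conn: "\<And>b. b \<in> Domain M \<Longrightarrow> joined R y b \<Longrightarrow> \<exists>ws. walk R ws \<and> hd ws = y \<and> last ws = b \<and> set ws \<subseteq> insert y (Domain M)"
    for y e'
  proof -
    have dom: "Domain (insert (y,e') M) = insert y (Domain M)" by auto
    have self: "{e',e'} \<in> simps E" using e'E Ec unfolding is_cpx_def by simp
    show ?thesis unfolding ok_def dom
    proof (intro conjI allI impI ballI)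
      show "insert (y, e') M \<subseteq> verts R \<times> verts E" using MRE yR e'E by blast
    next
      fix x e e'' assume "(x,e) \<in> insert (y,e') M" "(x,e'') \<in> insert (y,e') M"
      then show "e = e''" using yM Msv by blast
    next
      fix v assume "v \<in> D0" then show "(v, u v) \<in> insert (y,e') M" using MD0 by blast
    next
      fix x e assume "(x,e) \<in> insert (y,e') M" then show "p e = g x" using Mp pe' by blast
    next
      fix x e z f assume xe: "(x,e) \<in> insert (y,e') M" and zf: "(z,f) \<in> insert (y,e') M" and s: "{x,z} \<in> simps R"
      show "{e,f} \<in> simps E"
      proof (cases "(x,e) = (y,e')")
        case True
        show ?thesis
        proof (cases "(z,f) = (y,e')")
          case True then show ?thesis using \<open>(x,e) = (y,e')\<close> self by simp
        next
          case False then have "(z,f) \<in> M" using zf by blast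
          then show ?thesis using edges[of z f] s True by simp
        qed
      next
        case False then have xM: "(x,e) \<in> M" using xe by blast
        show ?thesis
        proof (cases "(z,f) = (y,e')")
          case True then show ?thesis using edges[OF xM] s by (simp add: insert_commute)
        next
          case False then have "(z,f) \<in> M" using zf by blast
          then show ?thesis using Med xM s by blast
        qed
      qed
    next
      fix a b assume a: "a \<in> insert y (Domain M)" and b: "b \<in> insert y (Domain M)" and j: "joined R a b"
      show "\<exists>ws. walk R ws \<and> hd ws = a \<and> last ws = b \<and> set ws \<subseteq> insert y (Domain M)"
      proof (cases "a = y")
        case True
        show ?thesis
        proof (cases "b = y")
          case True then show ?thesis using \<open>a = y\<close> yR by (intro exI[of _ "[y]"]) auto
        next
          case False then show ?thesis using conn b j \<open>a = y\<close> by blast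
        qed
      next
        case False
        then have aM: "a \<in> Domain M" using a by blast
        show ?thesis
        proof (cases "b = y")
          case True
          obtain ws where "walk R ws" "hd ws = y" "last ws = a" "set ws \<subseteq> insert y (Domain M)"
            using conn[OF aM] joined_sym[OF j] True by blast
          then show ?thesis using True by (intro exI[of _ "rev ws"]) (auto simp: walk_rev hd_rev last_rev)
        next
          case False then have "b \<in> Domain M" using b by blast
          then show ?thesis using Mrc[OF aM _ j] by blast
        qed
      qed
    qed
  qed
  have domM: "Domain M = verts R"
  proof (rule ccontr)
    assume "Domain M \<noteq> verts R"
    then obtain v where vR: "v \<in> verts R" and vM: "v \<notin> Domain M" using MRE by blast
    show False
    proof (cases "\<exists>d\<in>Domain M. joined R d v")
      case True
      then obtain d ws where "d \<in> Domain M" "walk R ws" "hd ws = d" "last ws = v" unfolding joined_def by blast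
      then obtain x y where xM: "x \<in> Domain M" and yM: "y \<notin> Domain M" and xy: "{x,y} \<in> simps R"
        using first_exit[of R ws "Domain M"] vM by blast
      then obtain e where xe: "(x,e) \<in> M" by blast
      have eE: "e \<in> verts E" using xe MRE by blast
      have "g ` {x,y} \<in> simps B" using g xy unfolding cpx_map_def by blast
      then have "{p e, g y} \<in> simps B" using Mp[OF xe] by simp
      then obtain e' where e'E: "e' \<in> verts E" and pe': "p e' = g y" and ee': "{e,e'} \<in> simps E"
        using P[OF eE] by blast
      have yR: "y \<in> verts R" using simp_verts[OF Rc xy] by simp
      have jxy: "joined R x y" using joined_edge[OF Rc xy] .
      have ok': "ok (insert (y,e') M)"
      proof (rule ext_ok[OF yR yM e'E pe'])
        fix z f assume zf: "(z,f) \<in> M" and yz: "{y,z} \<in> simps R"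
        show "{e',f} \<in> simps E"
        proof (cases "z = x")
          case True
          then have "f = e" using zf xe Msv by blast
          then show ?thesis using ee' by (simp add: insert_commute)
        next
          case False
          have "joined R x z" using joined_trans[OF jxy joined_edge[OF Rc yz]] .
          then obtain ws where ws: "walk R ws" "hd ws = x" "last ws = z" "set ws \<subseteq> Domain M"
            using Mrc[OF xM] zf by blast
          have "{z,y} \<in> simps R" using yz by (simp add: insert_commute)
          moreover have "{y,x} \<in> simps R" using xy by (simp add: insert_commute)
          moreover have "x \<noteq> z" using False by simp
          ultimately have False using no_second_edge[OF nc Rc ws yM] by blast
          then show ?thesis by (rule FalseE)
        qed
      next
        fix b assume bM: "b \<in> Domain M" and jyb: "joined R y b"
        have "joined R x b" using joined_trans[OF jxy jyb] .
        then obtain ws where ws: "walk R ws" "hd ws = x" "last ws = b" "set ws \<subseteq> Domain M"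
          using Mrc[OF xM bM] by blast
        obtain w1 wr where wsd: "ws = w1 # wr" using ws by (cases ws) auto
        have "walk R (y # ws)" using ws wsd yR xy by (simp add: insert_commute)
        moreover have "last (y # ws) = b" using ws wsd by simp
        ultimately show "\<exists>ws. walk R ws \<and> hd ws = y \<and> last ws = b \<and> set ws \<subseteq> insert y (Domain M)"
          using ws by (intro exI[of _ "y # ws"]) auto
      qed
      have "insert (y,e') M = M" using max[of "insert (y,e') M"] ok' A_def by blast
      then have "(y,e') \<in> M" by (metis insertI1)
      then have "y \<in> Domain M" by (rule DomainI)
      then show False using yM by (rule notE[rotated])
    next
      case False
      have "\<forall>d\<in>D0. \<not> joined R v d"
      proof (intro ballI notI)
        fix d assume d: "d \<in> D0" and j: "joined R v d"
        have "(d, u d) \<in> M" using MD0[OF d] .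
        then have "d \<in> Domain M" by (rule DomainI)
        moreover have "joined R d v" using joined_sym[OF j] .
        ultimately show False using False by blast
      qed
      then obtain e where eE: "e \<in> verts E" and pe: "p e = g v" using Q[OF vR] by blast
      have ok': "ok (insert (v,e) M)"
      proof (rule ext_ok[OF vR vM eE pe])
        fix z f assume zf: "(z,f) \<in> M" and vz: "{v,z} \<in> simps R"
        have "joined R z v" using joined_edge[OF Rc, of z v] vz by (simp add: insert_commute)
        then show "{e,f} \<in> simps E" using False zf by blast
      next
        fix b assume "b \<in> Domain M" and jvb: "joined R v b"
        have "joined R b v" using joined_sym[OF jvb] .
        then show "\<exists>ws. walk R ws \<and> hd ws = v \<and> last ws = b \<and> set ws \<subseteq> insert v (Domain M)"
          using False \<open>b \<in> Domain M\<close> by blast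
      qed
      have "insert (v,e) M = M" using max[of "insert (v,e) M"] ok' A_def by blast
      then have "(v,e) \<in> M" by (metis insertI1)
      then have "v \<in> Domain M" by (rule DomainI)
      then show False using vM by (rule notE[rotated])
    qed
  qed
  define h where "h x = (SOME e. (x,e) \<in> M)" for x
  have hM: "(x, h x) \<in> M" if "x \<in> verts R" for x
  proof -
    have "x \<in> Domain M" using that domM by simp
    then obtain e where "(x,e) \<in> M" by (rule DomainE)
    then show ?thesis unfolding h_def by (rule someI)
  qed
  have hv: "\<forall>v\<in>verts R. h v \<in> verts E"
  proof
    fix v assume "v \<in> verts R" then show "h v \<in> verts E" using hM[of v] MRE by blast
  qed
  have hs: "\<forall>s\<in>simps R. h ` s \<in> simps E"
  proof
    fix s assume s: "s \<in> simps R"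
    then obtain x y where sxy: "s = {x,y}" using refl_graph_simp[OF Rg] by blast
    have xy: "x \<in> verts R" "y \<in> verts R" using simp_verts[OF Rc s] sxy by auto
    have "{x,y} \<in> simps R" using s sxy by simp
    then have "{h x, h y} \<in> simps E" by (rule Med[OF hM[OF xy(1)] hM[OF xy(2)]])
    then show "h ` s \<in> simps E" using sxy by simp
  qed
  have hmap: "cpx_map R E h" unfolding cpx_map_def using Rc Ec hv hs by (intro conjI)
  have hD0: "\<forall>v\<in>D0. h v = u v"
  proof
    fix v assume v: "v \<in> D0"
    then have "v \<in> verts R" using D0 by blast
    then have "(v, h v) \<in> M" by (rule hM)
    moreover have "(v, u v) \<in> M" using MD0 v .
    ultimately show "h v = u v" by (rule Msv)
  qed
  have hp: "\<forall>v\<in>verts R. p (h v) = g v"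
  proof
    fix v assume "v \<in> verts R" then show "p (h v) = g v" using Mp[OF hM] by blast
  qed
  show ?thesis using hmap hD0 hp by blast
qed


lemma cells_Ex: "cells (Ex X) n = {g. (\<forall>c\<in>chains n. g c \<in> cells X (length c - 1)) \<and>
                    (\<forall>c\<in>chains n. \<forall>k \<theta>. simp_op k (length c - 1) \<theta> \<longrightarrow>
                        g (map (\<lambda>j. c ! \<theta> j) [0..<Suc k]) = act X k (length c - 1) \<theta> (g c)) \<and>
                    (\<forall>c. c \<notin> chains n \<longrightarrow> g c = undefined)}"
  by (simp add: cells_def Ex_def)

lemma act_Ex: "act (Ex X) m n \<theta> g = (\<lambda>c. if c \<in> chains m then g (map (\<lambda>s. \<theta> ` s) c) else undefined)"
  by (simp add: act_def Ex_def)

lemma cells_Sing: "cells (Sing K) n = {xs. length xs = Suc n \<and> set xs \<in> simps K}"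
  by (simp add: cells_def Sing_def)

lemma act_Sing: "act (Sing K) m n \<theta> xs = map (\<lambda>j. xs ! \<theta> j) [0..<Suc m]"
  by (simp add: act_def Sing_def)

lemma cells_ExI:
  assumes "\<And>c. c \<in> chains n \<Longrightarrow> g c \<in> cells X (length c - 1)"
    and "\<And>c k \<theta>. c \<in> chains n \<Longrightarrow> simp_op k (length c - 1) \<theta> \<Longrightarrow>
          g (map (\<lambda>j. c ! \<theta> j) [0..<Suc k]) = act X k (length c - 1) \<theta> (g c)"
    and "\<And>c. c \<notin> chains n \<Longrightarrow> g c = undefined"
  shows "g \<in> cells (Ex X) n"
  using assms unfolding cells_Ex by blast

lemma cells_ExD:
  assumes "g \<in> cells (Ex X) n"
  shows "\<And>c. c \<in> chains n \<Longrightarrow> g c \<in> cells X (length c - 1)"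
    and "\<And>c k \<theta>. c \<in> chains n \<Longrightarrow> simp_op k (length c - 1) \<theta> \<Longrightarrow>
          g (map (\<lambda>j. c ! \<theta> j) [0..<Suc k]) = act X k (length c - 1) \<theta> (g c)"
    and "\<And>c. c \<notin> chains n \<Longrightarrow> g c = undefined"
  using assms unfolding cells_Ex by blast+

lemma chains_ne: "c \<in> chains n \<Longrightarrow> c \<noteq> []"
  unfolding chains_def by blast

lemma chains_sub:
  assumes c: "c \<in> chains n" and th: "simp_op k (length c - 1) \<theta>"
  shows "map (\<lambda>j. c ! \<theta> j) [0..<Suc k] \<in> chains n"
proof -
  have cne: "c \<noteq> []" and cs: "\<forall>s\<in>set c. s \<noteq> {} \<and> s \<subseteq> {0..n}" and so: "sorted_wrt (\<subseteq>) c"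
    using c unfolding chains_def by blast+
  have lt: "\<theta> j < length c" if "j \<le> k" for j
    using th that cne unfolding simp_op_def by (metis One_nat_def Suc_pred length_greater_0_conv less_Suc_eq_le)
  have "\<forall>s\<in>set (map (\<lambda>j. c ! \<theta> j) [0..<Suc k]). s \<noteq> {} \<and> s \<subseteq> {0..n}"
    using lt cs by auto
  moreover have "sorted_wrt (\<subseteq>) (map (\<lambda>j. c ! \<theta> j) [0..<Suc k])"
    unfolding sorted_wrt_iff_nth_less
  proof (intro allI impI)
    fix i j assume ij: "i < j" "j < length (map (\<lambda>j. c ! \<theta> j) [0..<Suc k])"
    then have jk: "j \<le> k" by simp
    have le: "\<theta> i \<le> \<theta> j" using th ij jk unfolding simp_op_def by simp
    have "c ! \<theta> i \<subseteq> c ! \<theta> j"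
    proof (cases "\<theta> i = \<theta> j")
      case True then show ?thesis by simp
    next
      case False
      then have "\<theta> i < \<theta> j" using le by simp
      then show ?thesis using so lt[OF jk] unfolding sorted_wrt_iff_nth_less by blast
    qed
    then show "map (\<lambda>j. c ! \<theta> j) [0..<Suc k] ! i \<subseteq> map (\<lambda>j. c ! \<theta> j) [0..<Suc k] ! j"
      using ij by (simp del: upt_Suc)
  qed
  ultimately show ?thesis unfolding chains_def by simp
qed

lemma chains_img:
  assumes d: "d \<in> chains m" and th: "simp_op m n \<theta>"
  shows "map (\<lambda>s. \<theta> ` s) d \<in> chains n"
proof -
  have dne: "d \<noteq> []" and ds: "\<forall>s\<in>set d. s \<noteq> {} \<and> s \<subseteq> {0..m}" and so: "sorted_wrt (\<subseteq>) d"
    using d unfolding chains_def by blast+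
  have thn: "\<And>x. x \<le> m \<Longrightarrow> \<theta> x \<le> n" using th unfolding simp_op_def by blast
  have "\<forall>s\<in>set (map (\<lambda>s. \<theta> ` s) d). s \<noteq> {} \<and> s \<subseteq> {0..n}"
  proof
    fix s assume "s \<in> set (map (\<lambda>s. \<theta> ` s) d)"
    then obtain t where t: "t \<in> set d" and st: "s = \<theta> ` t" by auto
    have "t \<noteq> {}" "t \<subseteq> {0..m}" using ds t by auto
    then show "s \<noteq> {} \<and> s \<subseteq> {0..n}" using st thn by auto
  qed
  moreover have "sorted_wrt (\<subseteq>) (map (\<lambda>s. \<theta> ` s) d)"
    using so unfolding sorted_wrt_map by (rule sorted_wrt_mono_rel[rotated]) blast
  ultimately show ?thesis using dne unfolding chains_def by simp
qed

definition sconst :: "nat \<Rightarrow> 'a \<Rightarrow> nat set list \<Rightarrow> 'a list" where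
  "sconst k e = (\<lambda>d. if d \<in> chains k then replicate (length d) e else undefined)"

definition x0 :: "'a \<Rightarrow> nat set list \<Rightarrow> nat set list \<Rightarrow> 'a list" where
  "x0 e = (\<lambda>c. if c \<in> chains 0 then sconst (length c - 1) e else undefined)"

lemma map_nth_replicate: "(\<And>j. j \<le> k \<Longrightarrow> \<theta> j < n) \<Longrightarrow> map (\<lambda>j. replicate n e ! \<theta> j) [0..<Suc k] = replicate (Suc k) e"
proof (rule nth_equalityI)
  show "length (map (\<lambda>j. replicate n e ! \<theta> j) [0..<Suc k]) = length (replicate (Suc k) e)"
    by (simp only: length_map length_upt length_replicate)
next
  fix i assume a: "\<And>j. j \<le> k \<Longrightarrow> \<theta> j < n" and i: "i < length (map (\<lambda>j. replicate n e ! \<theta> j) [0..<Suc k])"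
  then have ik: "i < Suc k" by (simp only: length_map length_upt)
  then have "map (\<lambda>j. replicate n e ! \<theta> j) [0..<Suc k] ! i = replicate n e ! \<theta> i"
    using ik by (simp del: upt_Suc)
  also have "\<dots> = e" using a ik by simp
  moreover have "replicate (Suc k) e ! i = e" using ik by (rule nth_replicate)
  ultimately show "map (\<lambda>j. replicate n e ! \<theta> j) [0..<Suc k] ! i = replicate (Suc k) e ! i" by (simp only:)
qed

lemma theta_lt: "simp_op k (length c - 1) \<theta> \<Longrightarrow> c \<noteq> [] \<Longrightarrow> j \<le> k \<Longrightarrow> \<theta> j < length c"
  unfolding simp_op_def by (metis One_nat_def Suc_pred length_greater_0_conv less_Suc_eq_le)

lemma sconst_cells:
  assumes "{e} \<in> simps E"
  shows "sconst k e \<in> cells (Ex (Sing E)) k"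
proof (rule cells_ExI)
  fix d assume d: "d \<in> chains k"
  then have "d \<noteq> []" by (rule chains_ne)
  then show "sconst k e d \<in> cells (Sing E) (length d - 1)"
  proof -
    have "set (replicate (length d) e) = {e}" using \<open>d \<noteq> []\<close> by simp
    moreover have "length (replicate (length d) e) = Suc (length d - 1)" using \<open>d \<noteq> []\<close> by simp
    ultimately show ?thesis using d assms unfolding sconst_def cells_Sing by simp
  qed
next
  fix d j \<theta> assume d: "d \<in> chains k" and th: "simp_op j (length d - 1) \<theta>"
  have dne: "d \<noteq> []" using d by (rule chains_ne)
  have m: "map (\<lambda>i. d ! \<theta> i) [0..<Suc j] \<in> chains k" by (rule chains_sub[OF d th])
  show "sconst k e (map (\<lambda>i. d ! \<theta> i) [0..<Suc j]) = act (Sing E) j (length d - 1) \<theta> (sconst k e d)"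
    unfolding sconst_def act_Sing using m d theta_lt[OF th dne]
    by (simp only: if_True map_nth_replicate length_map length_upt) simp
next
  fix d assume "d \<notin> chains k" then show "sconst k e d = undefined" unfolding sconst_def by simp
qed

lemma act_sconst:
  assumes th: "simp_op k m \<theta>"
  shows "act (Ex (Sing E)) k m \<theta> (sconst m e) = sconst k e"
proof
  fix d show "act (Ex (Sing E)) k m \<theta> (sconst m e) d = sconst k e d"
  proof (cases "d \<in> chains k")
    case True
    have "map (\<lambda>s. \<theta> ` s) d \<in> chains m" by (rule chains_img[OF True th])
    then show ?thesis using True unfolding act_Ex sconst_def by simp
  next
    case False then show ?thesis unfolding act_Ex sconst_def by simp
  qed
qed

lemma x0_cells:
  assumes "{e} \<in> simps E"
  shows "x0 e \<in> cells (Ex (Ex (Sing E))) 0"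
proof (rule cells_ExI)
  fix c assume c: "c \<in> chains 0"
  show "x0 e c \<in> cells (Ex (Sing E)) (length c - 1)"
    using c sconst_cells[OF assms] unfolding x0_def by simp
next
  fix c k \<theta> assume c: "c \<in> chains 0" and th: "simp_op k (length c - 1) \<theta>"
  have m: "map (\<lambda>j. c ! \<theta> j) [0..<Suc k] \<in> chains 0" by (rule chains_sub[OF c th])
  have "x0 e (map (\<lambda>j. c ! \<theta> j) [0..<Suc k]) = sconst k e"
    using m unfolding x0_def by (simp del: upt_Suc)
  also have "\<dots> = act (Ex (Sing E)) k (length c - 1) \<theta> (sconst (length c - 1) e)"
    by (rule act_sconst[OF th, symmetric])
  also have "\<dots> = act (Ex (Sing E)) k (length c - 1) \<theta> (x0 e c)"
    using c unfolding x0_def by simp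
  finally show "x0 e (map (\<lambda>j. c ! \<theta> j) [0..<Suc k]) = act (Ex (Sing E)) k (length c - 1) \<theta> (x0 e c)" .
next
  fix c assume "c \<notin> chains 0" then show "x0 e c = undefined" unfolding x0_def by simp
qed

definition phi :: "'b \<Rightarrow> 'b \<Rightarrow> nat set list \<Rightarrow> nat set \<Rightarrow> 'b" where
  "phi b b' c s = (if \<exists>j\<in>s. 1 \<in> c ! j then b' else b)"

definition yB :: "'b \<Rightarrow> 'b \<Rightarrow> nat set list \<Rightarrow> nat set list \<Rightarrow> 'b list" where
  "yB b b' = (\<lambda>c. if c \<in> chains 1 then (\<lambda>d. if d \<in> chains (length c - 1) then map (phi b b' c) d else undefined) else undefined)"

lemma cpx_sub: "is_cpx K \<Longrightarrow> s \<in> simps K \<Longrightarrow> t \<noteq> {} \<Longrightarrow> t \<subseteq> s \<Longrightarrow> t \<in> simps K"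
  unfolding is_cpx_def by (elim conjE) (drule bspec, assumption, blast)

lemma chains_elem: "d \<in> chains n \<Longrightarrow> s \<in> set d \<Longrightarrow> s \<subseteq> {0..n}"
  unfolding chains_def by blast

lemma yB_inner_cells:
  assumes Bc: "is_cpx B" and bb: "{b,b'} \<in> simps B"
  shows "(\<lambda>d. if d \<in> chains m then map (phi b b' c) d else undefined) \<in> cells (Ex (Sing B)) m"
proof (rule cells_ExI)
  fix d assume d: "d \<in> chains m"
  have dne: "d \<noteq> []" using d by (rule chains_ne)
  have sub: "set (map (phi b b' c) d) \<subseteq> {b,b'}" unfolding phi_def by auto
  have ne: "set (map (phi b b' c) d) \<noteq> {}" using dne by simp
  have "set (map (phi b b' c) d) \<in> simps B" by (rule cpx_sub[OF Bc bb ne sub])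
  moreover have "length (map (phi b b' c) d) = Suc (length d - 1)" using dne by simp
  ultimately show "(if d \<in> chains m then map (phi b b' c) d else undefined) \<in> cells (Sing B) (length d - 1)"
    using d unfolding cells_Sing by simp
next
  fix d j \<theta> assume d: "d \<in> chains m" and th: "simp_op j (length d - 1) \<theta>"
  have dne: "d \<noteq> []" using d by (rule chains_ne)
  have mm: "map (\<lambda>i. d ! \<theta> i) [0..<Suc j] \<in> chains m" by (rule chains_sub[OF d th])
  have "map (phi b b' c) (map (\<lambda>i. d ! \<theta> i) [0..<Suc j]) = map (\<lambda>i. map (phi b b' c) d ! \<theta> i) [0..<Suc j]"
    using theta_lt[OF th dne] by (simp del: upt_Suc)
  then show "(if map (\<lambda>i. d ! \<theta> i) [0..<Suc j] \<in> chains m then map (phi b b' c) (map (\<lambda>i. d ! \<theta> i) [0..<Suc j]) else undefined) =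
         act (Sing B) j (length d - 1) \<theta> (if d \<in> chains m then map (phi b b' c) d else undefined)"
    using mm d unfolding act_Sing by (simp del: upt_Suc)
qed simp

lemma yB_cells:
  assumes Bc: "is_cpx B" and bb: "{b,b'} \<in> simps B"
  shows "yB b b' \<in> cells (Ex (Ex (Sing B))) 1"
proof (rule cells_ExI)
  fix c assume c: "c \<in> chains 1"
  show "yB b b' c \<in> cells (Ex (Sing B)) (length c - 1)"
    using c yB_inner_cells[OF Bc bb] unfolding yB_def by simp
next
  fix c k \<theta> assume c: "c \<in> chains 1" and th: "simp_op k (length c - 1) \<theta>"
  have cne: "c \<noteq> []" using c by (rule chains_ne)
  define c' where "c' = map (\<lambda>j. c ! \<theta> j) [0..<Suc k]"
  have c'c: "c' \<in> chains 1" unfolding c'_def by (rule chains_sub[OF c th])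
  have lc': "length c' - 1 = k" unfolding c'_def by simp
  have c'n: "c' ! j = c ! \<theta> j" if "j \<le> k" for j
    unfolding c'_def using that by (simp del: upt_Suc add: nth_map_upt)
  show "yB b b' c' = act (Ex (Sing B)) k (length c - 1) \<theta> (yB b b' c)"
  proof
    fix d
    show "yB b b' c' d = act (Ex (Sing B)) k (length c - 1) \<theta> (yB b b' c) d"
    proof (cases "d \<in> chains k")
      case True
      have dimg: "map (\<lambda>s. \<theta> ` s) d \<in> chains (length c - 1)" by (rule chains_img[OF True th])
      have "map (phi b b' c') d = map (phi b b' c) (map (\<lambda>s. \<theta> ` s) d)"
      proof -
        have "phi b b' c' s = phi b b' c (\<theta> ` s)" if "s \<in> set d" for s
        proof -
          have sk: "s \<subseteq> {0..k}" using chains_elem[OF True that] .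
          have "c' ! j = c ! \<theta> j" if "j \<in> s" for j using sk that c'n by auto
          then have "(\<exists>j\<in>s. 1 \<in> c' ! j) = (\<exists>j\<in>s. 1 \<in> c ! \<theta> j)" by (metis (no_types, lifting))
          then show ?thesis unfolding phi_def by auto
        qed
        then show ?thesis by simp
      qed
      then show ?thesis using True dimg c'c lc' c unfolding yB_def act_Ex by simp
    next
      case False
      then show ?thesis using c'c lc' c unfolding yB_def act_Ex by simp
    qed
  qed
next
  fix c assume "c \<notin> chains 1" then show "yB b b' c = undefined" unfolding yB_def by simp
qed

lemma chains0_elem: "c \<in> chains 0 \<Longrightarrow> s \<in> set c \<Longrightarrow> s = {0}"
  unfolding chains_def by auto

lemma chains_0_1: "c \<in> chains 0 \<Longrightarrow> c \<in> chains 1"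
  unfolding chains_def by fastforce

lemma face_yB:
  assumes pe: "p e = b"
  shows "face (Ex (Ex (Sing B))) 1 1 (yB b b') = Ex_map (Ex_map (Sing_map p)) 0 (x0 e)"
proof
  fix c
  show "face (Ex (Ex (Sing B))) 1 1 (yB b b') c = Ex_map (Ex_map (Sing_map p)) 0 (x0 e) c"
  proof (cases "c \<in> chains 0")
    case True
    have cc: "map (\<lambda>s. coface 1 ` s) c = c"
    proof (rule map_idI)
      fix s assume "s \<in> set c"
      then have "s = {0}" using chains0_elem[OF True] by blast
      then show "coface 1 ` s = s" unfolding coface_def by simp
    qed
    have c1: "c \<in> chains 1" using True by (rule chains_0_1)
    have inner: "(if d \<in> chains (length c - 1) then map (phi b b' c) d else undefined) =
                 Ex_map (Sing_map p) (length c - 1) (sconst (length c - 1) e) d" for d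
    proof (cases "d \<in> chains (length c - 1)")
      case dT: True
      have "phi b b' c s = b" if "s \<in> set d" for s
      proof -
        have "\<not> (1 \<in> c ! j)" if "j \<in> s" for j
        proof -
          have "j \<le> length c - 1" using chains_elem[OF dT \<open>s \<in> set d\<close>] that by auto
          then have "j < length c" using chains_ne[OF True] by (cases c) auto
          then have "c ! j \<in> set c" by simp
          then have "c ! j = {0}" using chains0_elem[OF True] by blast
          then show ?thesis by simp
        qed
        then show ?thesis unfolding phi_def by auto
      qed
      then have "map (phi b b' c) d = replicate (length d) b" by (simp add: map_replicate_const[symmetric] cong: map_cong)
      then show ?thesis using dT pe unfolding Ex_map_def Sing_map_def sconst_def by simp
    next
      case False then show ?thesis unfolding Ex_map_def by simp
    qed
    have "face (Ex (Ex (Sing B))) 1 1 (yB b b') c = yB b b' (map (\<lambda>s. coface 1 ` s) c)"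
      using True unfolding face_def act_Ex by simp
    also have "\<dots> = yB b b' c" using cc by simp
    also have "\<dots> = (\<lambda>d. if d \<in> chains (length c - 1) then map (phi b b' c) d else undefined)"
      using c1 unfolding yB_def by simp
    also have "\<dots> = Ex_map (Sing_map p) (length c - 1) (sconst (length c - 1) e)" using inner by (rule ext)
    also have "\<dots> = Ex_map (Ex_map (Sing_map p)) 0 (x0 e) c"
      using True by (simp add: Ex_map_def[of "Ex_map (Sing_map p)" 0] x0_def)
    finally show ?thesis .
  next
    case False then show ?thesis unfolding face_def act_Ex Ex_map_def by simp
  qed
qed

lemma kan_P:
  assumes kf: "kan_fibration (Ex (Ex (Sing E))) (Ex (Ex (Sing B))) (Ex_map (Ex_map (Sing_map p)))"
    and Ec: "is_cpx E" and Bc: "is_cpx B" and eE: "e \<in> verts E" and bb: "{p e, b'} \<in> simps B"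
  shows "\<exists>e'\<in>verts E. p e' = b' \<and> {e,e'} \<in> simps E"
proof -
  let ?X = "Ex (Ex (Sing E))" and ?Y = "Ex (Ex (Sing B))" and ?f = "Ex_map (Ex_map (Sing_map p))"
  have se: "{e} \<in> simps E" using Ec eE unfolding is_cpx_def by (elim conjE) (drule bspec, assumption)
  have xc: "x0 e \<in> cells ?X 0" by (rule x0_cells[OF se])
  have yc: "yB (p e) b' \<in> cells ?Y 1" by (rule yB_cells[OF Bc bb])
  have fy: "face ?Y 1 1 (yB (p e) b') = ?f 0 (x0 e)" by (rule face_yB) simp
  note K = conjunct2[OF kf[unfolded kan_fibration_def], rule_format]
  have p1: "\<forall>i\<le>1. i \<noteq> 0 \<longrightarrow> (\<lambda>i. x0 e) i \<in> cells ?X (1 - 1)" using xc by simp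
  have p2: "\<forall>i j. i < j \<longrightarrow> j \<le> 1 \<longrightarrow> i \<noteq> 0 \<longrightarrow> j \<noteq> 0 \<longrightarrow>
            face ?X (1 - 1) i ((\<lambda>i. x0 e) j) = face ?X (1 - 1) (j - 1) ((\<lambda>i. x0 e) i)" by auto
  have p3: "\<forall>i\<le>1. i \<noteq> 0 \<longrightarrow> face ?Y 1 i (yB (p e) b') = ?f (1 - 1) ((\<lambda>i. x0 e) i)"
  proof (intro allI impI)
    fix i :: nat assume "i \<le> 1" "i \<noteq> 0" then have "i = 1" by simp
    then show "face ?Y 1 i (yB (p e) b') = ?f (1 - 1) ((\<lambda>i. x0 e) i)" using fy by simp
  qed
  obtain z where zc: "z \<in> cells ?X 1" and pz: "?f 1 z = yB (p e) b'"
    and fz: "\<forall>i\<le>1. i \<noteq> 0 \<longrightarrow> face ?X 1 i z = (\<lambda>i. x0 e) i"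
  proof -
    have "\<exists>z\<in>cells ?X 1. ?f 1 z = yB (p e) b' \<and> (\<forall>i\<le>1. i \<noteq> 0 \<longrightarrow> face ?X 1 i z = (\<lambda>i. x0 e) i)"
      apply (rule K[of 1 0 "\<lambda>i. x0 e" "yB (p e) b'"])
      using xc p2 yc p3 by simp_all
    then show ?thesis using that by blast
  qed
  have fz1: "face ?X 1 1 z = x0 e" using fz by simp
  define c :: "nat set list" where "c = [{0},{0,1}]"
  have cch: "c \<in> chains 1" unfolding c_def chains_def by auto
  have lc: "length c - 1 = 1" unfolding c_def by simp
  have c0: "[{0}] \<in> chains 0" unfolding chains_def by auto
  have zc1: "z c \<in> cells (Ex (Sing E)) 1" using cells_ExD(1)[OF zc cch] lc by simp
  have zcd: "z c c \<in> cells (Sing E) 1" using cells_ExD(1)[OF zc1 cch] lc by simp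
  have "?f 1 z c c = yB (p e) b' c c" using pz by simp
  moreover have "?f 1 z c c = map p (z c c)" using cch lc unfolding Ex_map_def Sing_map_def by simp
  moreover have "yB (p e) b' c c = map (phi (p e) b' c) c" using cch lc unfolding yB_def by simp
  moreover have "map (phi (p e) b' c) c = [p e, b']" unfolding c_def phi_def by auto
  ultimately have mp: "map p (z c c) = [p e, b']" by simp
  have len: "length (z c c) = 2" using arg_cong[OF mp, of length] by simp
  have "\<exists>e1 e2. z c c = [e1, e2]" using len by (auto simp: length_Suc_conv numeral_2_eq_2)
  then obtain e1 e2 where zcc: "z c c = [e1, e2]" by blast
  have pe2: "p e2 = b'" using mp zcc by simp
  have "face ?X 1 1 z [{0}] = z [{0}]" using c0 unfolding face_def act_Ex coface_def by simp
  then have za: "z [{0}] = sconst 0 e" using fz1 c0 unfolding x0_def by simp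
  have so: "simp_op 0 (length c - 1) (\<lambda>_. 0)" unfolding simp_op_def by simp
  have "z (map (\<lambda>j. c ! (\<lambda>_. 0) j) [0..<Suc 0]) = act (Ex (Sing E)) 0 (length c - 1) (\<lambda>_. 0) (z c)"
    by (rule cells_ExD(2)[OF zc cch so])
  then have "z [{0}] = act (Ex (Sing E)) 0 1 (\<lambda>_. 0) (z c)" using lc unfolding c_def by simp
  then have "z [{0}] [{0}] = z c [{0}]" using c0 unfolding act_Ex by simp
  then have zc0: "z c [{0}] = [e]" using za c0 unfolding sconst_def by simp
  have so1: "simp_op 0 (length c - 1) (\<lambda>_. 0)" unfolding simp_op_def by simp
  have "z c (map (\<lambda>j. c ! (\<lambda>_. 0) j) [0..<Suc 0]) = act (Sing E) 0 (length c - 1) (\<lambda>_. 0) (z c c)"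
    by (rule cells_ExD(2)[OF zc1 cch so1])
  then have "z c [{0}] = [z c c ! 0]" unfolding c_def act_Sing by simp
  then have e1e: "e1 = e" using zc0 zcc by simp
  have ee2: "{e, e2} \<in> simps E" using zcd zcc e1e unfolding cells_Sing by simp
  have "e2 \<in> verts E" using Ec ee2 unfolding is_cpx_def by (elim conjE) (drule bspec, assumption, blast)
  then show ?thesis using pe2 ee2 by (intro bexI[of _ e2]) simp_all
qed


lemma pc_clopen:
  assumes "path_component_of X a c" "openin X U" "closedin X U" "c \<in> U"
  shows "a \<in> U"
proof -
  have "connected_component_of X a c" using assms(1) by (rule path_imp_connected_component_of)
  then obtain T where T: "connectedin X T" "a \<in> T" "c \<in> T" unfolding connected_component_of_def by blast
  have "T \<subseteq> U \<or> disjnt T U" using connectedin_clopen_cases[OF T(1) assms(3,2)] .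
  then show ?thesis using T assms(4) unfolding disjnt_def by blast
qed

lemma openin_realize: "openin (realize X) = real_open X"
  unfolding realize_def by (rule topology_inverse'[OF istopology_real_open])

lemma topspace_pow: "topspace (subtopology (powertop_real UNIV) S) = S"
  by simp

lemma class_in_carrier: "x \<in> cells X n \<Longrightarrow> t \<in> std_simplex n \<Longrightarrow> real_rel X `` {(n, x, t)} \<in> real_carrier X"
  unfolding real_carrier_def real_pts_def by (rule quotientI) simp

lemma real_open_carrier: "real_open X (real_carrier X)"
  unfolding real_open_def
proof (intro conjI allI ballI)
  fix n x assume x: "x \<in> cells X n"
  have "{t \<in> std_simplex n. real_rel X `` {(n, x, t)} \<in> real_carrier X} = std_simplex n"
    using class_in_carrier[OF x] by blast
  then show "openin (subtopology (powertop_real UNIV) (std_simplex n))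
          {t \<in> std_simplex n. real_rel X `` {(n, x, t)} \<in> real_carrier X}"
    by (metis openin_topspace topspace_pow)
qed simp

lemma topspace_realize: "topspace (realize X) = real_carrier X"
proof -
  have "topspace (realize X) = \<Union>{S. real_open X S}" unfolding topspace_def openin_realize by simp
  also have "\<dots> = real_carrier X" using real_open_carrier[of X] unfolding real_open_def by blast
  finally show ?thesis .
qed

definition Wq :: "'b cpx \<Rightarrow> 'b \<Rightarrow> ('a \<Rightarrow> 'b) \<Rightarrow> (nat \<times> 'a list \<times> (nat \<Rightarrow> real)) set" where
  "Wq B b q = {pt. \<exists>v\<in>set (fst (snd pt)). joined B b (q v)}"

lemma gen_inv:
  assumes H: "\<And>s v w. s \<in> simps K \<Longrightarrow> v \<in> s \<Longrightarrow> w \<in> s \<Longrightarrow> joined B (q v) (q w)"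
    and ac: "(a, c) \<in> real_gen (Sing K)"
  shows "a \<in> Wq B b q \<longleftrightarrow> c \<in> Wq B b q"
proof -
  obtain m n \<theta> x t where a: "a = (m, act (Sing K) m n \<theta> x, t)" and c: "c = (n, x, push m \<theta> t)"
    and th: "simp_op m n \<theta>" and x: "x \<in> cells (Sing K) n"
    using ac unfolding real_gen_def by blast
  have lx: "length x = Suc n" and sx: "set x \<in> simps K" using x unfolding cells_Sing by auto
  have thl: "\<theta> j < length x" if "j \<le> m" for j using th that lx unfolding simp_op_def by auto
  have sub: "set (act (Sing K) m n \<theta> x) \<subseteq> set x" unfolding act_Sing using thl by auto
  have w0: "x ! \<theta> 0 \<in> set (act (Sing K) m n \<theta> x)" unfolding act_Sing by (simp del: upt_Suc)
  have w0x: "x ! \<theta> 0 \<in> set x" using w0 sub by blast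
  show ?thesis
  proof
    assume "a \<in> Wq B b q"
    then obtain v where "v \<in> set (act (Sing K) m n \<theta> x)" "joined B b (q v)" unfolding Wq_def a by auto
    then show "c \<in> Wq B b q" unfolding Wq_def c using sub by auto
  next
    assume "c \<in> Wq B b q"
    then obtain v where v: "v \<in> set x" "joined B b (q v)" unfolding Wq_def c by auto
    have "joined B (q v) (q (x ! \<theta> 0))" by (rule H[OF sx v(1) w0x])
    then have "joined B b (q (x ! \<theta> 0))" by (rule joined_trans[OF v(2)])
    then show "a \<in> Wq B b q" unfolding Wq_def a using w0 by auto
  qed
qed

lemma rel_inv:
  assumes H: "\<And>s v w. s \<in> simps K \<Longrightarrow> v \<in> s \<Longrightarrow> w \<in> s \<Longrightarrow> joined B (q v) (q w)"
    and ac: "(a, c) \<in> real_rel (Sing K)"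
  shows "a \<in> Wq B b q \<longleftrightarrow> c \<in> Wq B b q"
  using ac unfolding real_rel_def
proof (induction rule: rtrancl_induct)
  case base then show ?case by simp
next
  case (step y z)
  have "y \<in> Wq B b q \<longleftrightarrow> z \<in> Wq B b q"
  proof -
    consider "(y,z) \<in> real_gen (Sing K)" | "(z,y) \<in> real_gen (Sing K)" | "y = z"
      using step(2) by blast
    then show ?thesis
    proof cases
      case 1 then show ?thesis using gen_inv[OF H 1] by simp
    next
      case 2 then show ?thesis using gen_inv[OF H 2] by simp
    next
      case 3 then show ?thesis by simp
    qed
  qed
  then show ?case using step(3) by simp
qed

lemma walk_lift:
  assumes P: "\<And>e b'. e \<in> verts E \<Longrightarrow> {p e, b'} \<in> simps B \<Longrightarrow> \<exists>e'\<in>verts E. p e' = b' \<and> {e,e'} \<in> simps E"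
  shows "walk B ws \<Longrightarrow> e \<in> verts E \<Longrightarrow> p e = hd ws \<Longrightarrow> \<exists>e'\<in>verts E. p e' = last ws"
proof (induction ws arbitrary: e)
  case Nil then show ?case by simp
next
  case (Cons a ws)
  show ?case
  proof (cases "ws = []")
    case True then show ?thesis using Cons.prems by auto
  next
    case False
    then obtain c zs where wsd: "ws = c # zs" by (cases ws) auto
    have "{p e, c} \<in> simps B" using Cons.prems wsd by simp
    then obtain e' where e': "e' \<in> verts E" "p e' = c" using P[OF Cons.prems(2)] by blast
    have "walk B ws" using Cons.prems wsd by simp
    then have "\<exists>e''\<in>verts E. p e'' = last ws" using Cons.IH e' wsd by simp
    then show ?thesis using wsd by simp
  qed
qed

lemma weq_Q:
  assumes w: "weak_homotopy_equivalence (realize (Sing E)) (realize (Sing B)) (realize_map (Sing B) (Sing_map p))"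
    and pm: "cpx_map E B p"
    and P: "\<And>e b'. e \<in> verts E \<Longrightarrow> {p e, b'} \<in> simps B \<Longrightarrow> \<exists>e'\<in>verts E. p e' = b' \<and> {e,e'} \<in> simps E"
    and bB: "b \<in> verts B"
  shows "\<exists>e\<in>verts E. p e = b"
proof -
  have Ec: "is_cpx E" and Bc: "is_cpx B" using pm unfolding cpx_map_def by blast+
  have pms: "\<And>s. s \<in> simps E \<Longrightarrow> p ` s \<in> simps B" using pm unfolding cpx_map_def by blast
  let ?W = "Wq B b (\<lambda>v. v)" and ?W' = "Wq B b p"
  let ?RB = "real_rel (Sing B)" and ?RE = "real_rel (Sing E)"
  have HB: "joined B v w" if "s \<in> simps B" "v \<in> s" "w \<in> s" for s v w
  proof -
    have "{v,w} \<in> simps B" by (rule cpx_sub[OF Bc that(1)]) (use that in auto)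
    then show ?thesis by (rule joined_edge[OF Bc])
  qed
  have HE: "joined B (p v) (p w)" if "s \<in> simps E" "v \<in> s" "w \<in> s" for s v w
    using HB[OF pms[OF that(1)]] that by blast
  have RB: "a \<in> ?W \<longleftrightarrow> c \<in> ?W" if "(a,c) \<in> ?RB" for a c
  proof (rule rel_inv[where K=B and q="\<lambda>v. v"])
    show "(a,c) \<in> ?RB" by (rule that)
  next
    fix s v w assume "s \<in> simps B" "v \<in> s" "w \<in> s"
    then show "joined B v w" by (rule HB)
  qed
  have RE: "a \<in> ?W' \<longleftrightarrow> c \<in> ?W'" if "(a,c) \<in> ?RE" for a c
  proof (rule rel_inv[where K=E and q=p])
    show "(a,c) \<in> ?RE" by (rule that)
  next
    fix s v w assume "s \<in> simps E" "v \<in> s" "w \<in> s"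
    then show "joined B (p v) (p w)" by (rule HE)
  qed
  define U where "U = {P \<in> real_carrier (Sing B). \<exists>pt\<in>P. pt \<in> ?W}"
  have memU: "?RB `` {(n,x,t)} \<in> U \<longleftrightarrow> (n,x,t) \<in> ?W" if x: "x \<in> cells (Sing B) n" and t: "t \<in> std_simplex n" for n x t
  proof
    assume "?RB `` {(n,x,t)} \<in> U"
    then obtain pt where pt: "pt \<in> ?RB `` {(n,x,t)}" "pt \<in> ?W" unfolding U_def by blast
    have "((n,x,t), pt) \<in> ?RB" using pt(1) by blast
    then show "(n,x,t) \<in> ?W" using RB pt(2) by blast
  next
    assume a: "(n,x,t) \<in> ?W"
    have "((n,x,t),(n,x,t)) \<in> ?RB" unfolding real_rel_def by simp
    then have "(n,x,t) \<in> ?RB `` {(n,x,t)}" by blast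
    then show "?RB `` {(n,x,t)} \<in> U" unfolding U_def using class_in_carrier[OF x t] a by blast
  qed
  have Wind: "(n,x,t) \<in> ?W \<longleftrightarrow> (\<exists>v\<in>set x. joined B b v)" for n x t unfolding Wq_def by simp
  have oU: "real_open (Sing B) U" unfolding real_open_def
  proof (intro conjI allI ballI)
    show "U \<subseteq> real_carrier (Sing B)" unfolding U_def by blast
    fix n x assume x: "x \<in> cells (Sing B) n"
    show "openin (subtopology (powertop_real UNIV) (std_simplex n)) {t \<in> std_simplex n. ?RB `` {(n, x, t)} \<in> U}"
    proof (cases "\<exists>v\<in>set x. joined B b v")
      case True
      then have "{t \<in> std_simplex n. ?RB `` {(n, x, t)} \<in> U} = std_simplex n" using memU[OF x] Wind by blast
      then show ?thesis by (metis openin_topspace topspace_pow)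
    next
      case False
      then have "{t \<in> std_simplex n. ?RB `` {(n, x, t)} \<in> U} = {}" using memU[OF x] Wind by blast
      then show ?thesis by (simp only: openin_empty)
    qed
  qed
  have oV: "real_open (Sing B) (real_carrier (Sing B) - U)" unfolding real_open_def
  proof (intro conjI allI ballI)
    show "real_carrier (Sing B) - U \<subseteq> real_carrier (Sing B)" by blast
    fix n x assume x: "x \<in> cells (Sing B) n"
    show "openin (subtopology (powertop_real UNIV) (std_simplex n)) {t \<in> std_simplex n. ?RB `` {(n, x, t)} \<in> real_carrier (Sing B) - U}"
    proof (cases "\<exists>v\<in>set x. joined B b v")
      case True
      then have "{t \<in> std_simplex n. ?RB `` {(n, x, t)} \<in> real_carrier (Sing B) - U} = {}" using memU[OF x] Wind by blast
      then show ?thesis by (simp only: openin_empty)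
    next
      case False
      then have "{t \<in> std_simplex n. ?RB `` {(n, x, t)} \<in> real_carrier (Sing B) - U} = std_simplex n"
        using memU[OF x] Wind class_in_carrier[OF x] by blast
      then show ?thesis by (metis openin_topspace topspace_pow)
    qed
  qed
  have openU: "openin (realize (Sing B)) U" using oU by (simp add: openin_realize)
  have closedU: "closedin (realize (Sing B)) U"
    unfolding closedin_def topspace_realize openin_realize using oV U_def by blast
  define t0 :: "nat \<Rightarrow> real" where "t0 = (\<lambda>i. if i = 0 then 1 else 0)"
  have t0s: "t0 \<in> std_simplex 0" unfolding std_simplex_def t0_def by simp
  have bs: "{b} \<in> simps B" using Bc bB unfolding is_cpx_def by blast
  have bc: "[b] \<in> cells (Sing B) 0" using bs unfolding cells_Sing by simp
  have jbb: "joined B b b" unfolding joined_def using bB by (intro exI[of _ "[b]"]) simp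
  have y0U: "?RB `` {(0,[b],t0)} \<in> U" using memU[OF bc t0s] Wind jbb by simp
  have y0T: "?RB `` {(0,[b],t0)} \<in> topspace (realize (Sing B))"
    unfolding topspace_realize by (rule class_in_carrier[OF bc t0s])
  let ?F = "realize_map (Sing B) (Sing_map p)"
  have wc: "continuous_map (realize (Sing E)) (realize (Sing B)) ?F"
    using conjunct1[OF w[unfolded weak_homotopy_equivalence_def]] .
  have wp: "\<forall>y\<in>topspace (realize (Sing B)). \<exists>x\<in>topspace (realize (Sing E)). path_component_of (realize (Sing B)) (?F x) y"
    using conjunct1[OF conjunct2[OF w[unfolded weak_homotopy_equivalence_def]]] .
  obtain x where xT: "x \<in> topspace (realize (Sing E))" and pc: "path_component_of (realize (Sing B)) (?F x) (?RB `` {(0,[b],t0)})"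
    using wp y0T by blast
  have FxT: "?F x \<in> topspace (realize (Sing B))" using continuous_map_image_subset_topspace[OF wc] xT by blast
  have "?F x \<in> U" by (rule pc_clopen[OF pc openU closedU y0U])
  then obtain pt where pt: "pt \<in> ?F x" "pt \<in> ?W" unfolding U_def by blast
  then obtain n xs t where nxt: "(n,xs,t) \<in> x" and pt2: "pt \<in> ?RB `` {(n, Sing_map p n xs, t)}"
    unfolding realize_map_def by blast
  have "((n, Sing_map p n xs, t), pt) \<in> ?RB" using pt2 by blast
  then have "(n, Sing_map p n xs, t) \<in> ?W" using RB pt(2) by blast
  then have nW': "(n, xs, t) \<in> ?W'" unfolding Wq_def Sing_map_def by auto
  have "x \<in> real_carrier (Sing E)" using xT topspace_realize by blast
  then obtain a where aP: "a \<in> real_pts (Sing E)" and xa: "x = ?RE `` {a}"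
    unfolding real_carrier_def by (rule quotientE)
  have "(a, (n,xs,t)) \<in> ?RE" using nxt xa by blast
  then have aW: "a \<in> ?W'" using RE nW' by blast
  obtain n0 xs0 s0 where ad: "a = (n0, xs0, s0)" by (cases a) auto
  have "xs0 \<in> cells (Sing E) n0" using aP ad unfolding real_pts_def by simp
  then have sxs: "set xs0 \<in> simps E" unfolding cells_Sing by simp
  obtain v where v: "v \<in> set xs0" "joined B b (p v)" using aW ad unfolding Wq_def by auto
  have vE: "v \<in> verts E" by (rule simp_verts[OF Ec sxs v(1)])
  obtain ws where ws: "walk B ws" "hd ws = p v" "last ws = b" using joined_sym[OF v(2)] unfolding joined_def by blast
  show ?thesis using walk_lift[OF P ws(1) vE] ws by simp
qed


lemma edge_in_subtree:
  assumes S: "tree S" and R: "tree R" and sub: "subcomplex S R"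
    and a: "a \<in> verts S" and b: "b \<in> verts S" and ab: "{a,b} \<in> simps R" and ne: "a \<noteq> b"
  shows "{a,b} \<in> simps S"
proof -
  have svr: "verts S \<subseteq> verts R" and ssr: "simps S \<subseteq> simps R" using sub unfolding subcomplex_def by auto
  have nc: "\<not> has_cycle R" using R unfolding tree_def by blast
  have "connected_cpx S" using S unfolding tree_def by blast
  then obtain ws where ws: "walk S ws" "hd ws = a" "last ws = b" using a b unfolding connected_cpx_def by blast
  obtain ds where ds: "walk S ds" "distinct ds" "hd ds = a" "last ds = b"
    using walk_distinct[OF ws(1)] ws by auto
  obtain d1 rest where dsd: "ds = d1 # rest" using ds by (cases ds) auto
  obtain d2 rest2 where r2: "rest = d2 # rest2" using dsd ds ne by (cases rest) auto
  show ?thesis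
  proof (cases "rest2 = []")
    case True
    then show ?thesis using ds dsd r2 by simp
  next
    case False
    have "walk R ds" using walk_mono[OF ds(1) svr ssr] .
    moreover have "length ds \<ge> 3" using dsd r2 False by (cases rest2) auto
    moreover have "{last ds, hd ds} \<in> simps R" using ds ab by (simp add: insert_commute)
    ultimately have "has_cycle R" using cycle_from_walk ds(2) by blast
    then show ?thesis using nc by blast
  qed
qed

theorem corollary6p8:
  fixes T :: "'a cpx" and S R :: "'b cpx"
  shows "(forest T \<longrightarrow>
            (\<forall>(E :: 'c cpx) (B :: 'd cpx) p. thomason_trivial_fib E B p \<longrightarrow>
               has_llp (empty_cpx :: 'a cpx) T id E B p))
       \<and> (tree S \<and> tree R \<and> subcomplex S R \<longrightarrow>
            (\<forall>(E :: 'c cpx) (B :: 'd cpx) p. thomason_trivial_fib E B p \<longrightarrow>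
               has_llp S R id E B p))"
proof -
  have basics: "cpx_map E B p \<and> is_cpx E \<and> is_cpx B \<and>
      (\<forall>e b'. e \<in> verts E \<longrightarrow> {p e, b'} \<in> simps B \<longrightarrow> (\<exists>e'\<in>verts E. p e' = b' \<and> {e,e'} \<in> simps E)) \<and>
      (\<forall>b\<in>verts B. \<exists>e\<in>verts E. p e = b)"
    if tf: "thomason_trivial_fib E B p" for E :: "'c cpx" and B :: "'d cpx" and p
  proof -
    have fib: "thomason_fib E B p" and weq: "thomason_weq E B p"
      using tf unfolding thomason_trivial_fib_def by blast+
    have pm: "cpx_map E B p" using fib unfolding thomason_fib_def by blast
    have kf: "kan_fibration (Ex (Ex (Sing E))) (Ex (Ex (Sing B))) (Ex_map (Ex_map (Sing_map p)))"
      using fib unfolding thomason_fib_def by blast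
    have w: "weak_homotopy_equivalence (realize (Sing E)) (realize (Sing B)) (realize_map (Sing B) (Sing_map p))"
    proof -
      have sw: "sset_weq (Sing E) (Sing B) (Sing_map p)" using conjunct2[OF weq[unfolded thomason_weq_def]] .
      show ?thesis using conjunct2[OF sw[unfolded sset_weq_def]] .
    qed
    have Ec: "is_cpx E" and Bc: "is_cpx B" using pm unfolding cpx_map_def by blast+
    have P: "\<exists>e'\<in>verts E. p e' = b' \<and> {e,e'} \<in> simps E" if "e \<in> verts E" "{p e, b'} \<in> simps B" for e b'
      by (rule kan_P[OF kf Ec Bc that])
    have Q: "\<exists>e\<in>verts E. p e = b" if "b \<in> verts B" for b
      by (rule weq_Q[OF w pm P that])
    show ?thesis using pm Ec Bc P Q by blast
  qed
  have part1: "has_llp (empty_cpx :: 'a cpx) T id E B p"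
    if fT: "forest T" and tf: "thomason_trivial_fib E B p" for E :: "'c cpx" and B :: "'d cpx" and p
  proof -
    note bs = basics[OF tf]
    have Ec: "is_cpx E" using bs by blast
    have P: "\<And>e b'. e \<in> verts E \<Longrightarrow> {p e, b'} \<in> simps B \<Longrightarrow> \<exists>e'\<in>verts E. p e' = b' \<and> {e,e'} \<in> simps E"
      using bs by blast
    have Qb: "\<And>b. b \<in> verts B \<Longrightarrow> \<exists>e\<in>verts E. p e = b" using bs by blast
    have Tg: "refl_graph T" and nc: "\<not> has_cycle T" using fT unfolding forest_def by blast+
    show ?thesis unfolding has_llp_def
    proof (intro allI impI)
      fix u :: "'a \<Rightarrow> 'c" and g assume g: "cpx_map T B g"
      have Q: "\<exists>e\<in>verts E. p e = g v" if "v \<in> verts T" for v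
        using Qb g that unfolding cpx_map_def by blast
      obtain h where h: "cpx_map T E h" "\<forall>v\<in>verts T. p (h v) = g v"
        using extend[OF Tg nc Ec g P, of "{}" u] Q by auto
      then show "\<exists>h. cpx_map T E h \<and> (\<forall>v\<in>verts empty_cpx. h (id v) = u v) \<and> (\<forall>v\<in>verts T. p (h v) = g v)"
        unfolding empty_cpx_def verts_def by auto
    qed
  qed
  have part2: "has_llp S R id E B p"
    if trees: "tree S \<and> tree R \<and> subcomplex S R" and tf: "thomason_trivial_fib E B p" for E :: "'c cpx" and B :: "'d cpx" and p
  proof -
    note bs = basics[OF tf]
    have Ec: "is_cpx E" using bs by blast
    have P: "\<And>e b'. e \<in> verts E \<Longrightarrow> {p e, b'} \<in> simps B \<Longrightarrow> \<exists>e'\<in>verts E. p e' = b' \<and> {e,e'} \<in> simps E"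
      using bs by blast
    have S: "tree S" and R: "tree R" and sub: "subcomplex S R" using trees by blast+
    have Rg: "refl_graph R" and nc: "\<not> has_cycle R" and Rconn: "connected_cpx R" using R unfolding tree_def by blast+
    have Sconn: "connected_cpx S" using S unfolding tree_def by blast
    have svr: "verts S \<subseteq> verts R" and ssr: "simps S \<subseteq> simps R" using sub unfolding subcomplex_def by auto
    show ?thesis unfolding has_llp_def
    proof (intro allI impI)
      fix u g assume uS: "cpx_map S E u" and g: "cpx_map R B g" and comp: "\<forall>v\<in>verts S. p (u v) = g (id v)"
      have u1: "u v \<in> verts E \<and> p (u v) = g v" if "v \<in> verts S" for v
        using uS comp that unfolding cpx_map_def by auto
      have u2: "{u a, u b} \<in> simps E" if a: "a \<in> verts S" and b: "b \<in> verts S" and ab: "{a,b} \<in> simps R" for a b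
      proof (cases "a = b")
        case True
        have "u a \<in> verts E" using u1[OF a] by blast
        then have "{u a} \<in> simps E" using Ec unfolding is_cpx_def by blast
        then show ?thesis using True by simp
      next
        case False
        have "{a,b} \<in> simps S" by (rule edge_in_subtree[OF S R sub a b ab False])
        then have "u ` {a,b} \<in> simps E" using uS unfolding cpx_map_def by blast
        then show ?thesis by simp
      qed
      have rc0: "\<exists>ws. walk R ws \<and> hd ws = a \<and> last ws = b \<and> set ws \<subseteq> verts S"
        if a: "a \<in> verts S" and b: "b \<in> verts S" for a b
      proof -
        obtain ws where ws: "walk S ws" "hd ws = a" "last ws = b" using Sconn a b unfolding connected_cpx_def by blast
        have "walk R ws" using walk_mono[OF ws(1) svr ssr] .
        moreover have "set ws \<subseteq> verts S" using walk_subset[OF ws(1)] .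
        ultimately show ?thesis using ws by blast
      qed
      have Q: "\<exists>e\<in>verts E. p e = g v" if v: "v \<in> verts R" and nj: "\<forall>d\<in>verts S. \<not> joined R v d" for v
      proof -
        obtain d where d: "d \<in> verts S" using Sconn unfolding connected_cpx_def by blast
        have "d \<in> verts R" using d svr by blast
        then have "joined R v d" using Rconn v unfolding connected_cpx_def joined_def by blast
        then show ?thesis using nj d by blast
      qed
      obtain h where h: "cpx_map R E h" "\<forall>v\<in>verts S. h v = u v" "\<forall>v\<in>verts R. p (h v) = g v"
        using extend[OF Rg nc Ec g P svr, of u] u1 u2 rc0 Q by blast
      then show "\<exists>h. cpx_map R E h \<and> (\<forall>v\<in>verts S. h (id v) = u v) \<and> (\<forall>v\<in>verts R. p (h v) = g v)"
        by auto
    qed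
  qed
  show ?thesis using part1 part2 by blast
qed

end
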